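(* The size $\gamma$ of the smallest string attractor satisfies, for each edit type $\ast\in\{\mathrm{sub},\mathrm{ins},\mathrm{del}\}$: $\mathsf{MS}_{\ast}(\gamma,n)=O(\log n)$ and $\mathsf{AS}_{\ast}(\gamma,n)=O(\delta\log n)$; that is, there is a constant $c$ such that for every string $T$ of length $n$ and every string $T'$ with $\mathsf{ed}(T,T')=1$ (of the corresponding type), $\gamma(T')\le c\,\gamma(T)\log n$ and $\gamma(T')-\gamma(T)\le c\,\delta(T)\log n$.
   Context: Strings are over an alphabet $\Sigma$; $\mathsf{ed}$ is the edit distance (single-character substitutions, insertions, deletions). For a measure $C$: $\mathsf{MS}_{\mathrm{sub}}(C,n)=\max_{T\in\Sigma^n}\{C(T')/C(T): T'\in\Sigma^n,\ \mathsf{ed}(T,T')=1\}$, with $\mathsf{MS}_{\mathrm{ins}},\mathsf{MS}_{\mathrm{del}}$ analogous for $T'$ of length $n+1$, resp. $n-1$, and $\mathsf{AS}_\ast$ analogous with $C(T')-C(T)$. A string attractor of $T$ is a set $\Gamma$ of positions such that every substring of $T$ has an occurrence $T[i..j]$ containing a position of $\Gamma$; $\gamma(T)$ is the minimum size of a string attractor. $\delta(T)=\max_{1\le k\le |T|}\mathsf{Substr}(T,k)/k$, where $\mathsf{Substr}(T,k)$ is the number of distinct length-$k$ substrings of $T$; bounds stated in terms of $\delta$ use $\delta(T)$ of the original string $T$. *)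

theory Defs
  imports Complex_Main
begin

text \<open>Strings are lists over an arbitrary alphabet type 'a; positions are 0-based.\<close>

fun ed :: "'a list \<Rightarrow> 'a list \<Rightarrow> nat" where
  "ed [] ys = length ys"
| "ed xs [] = length xs"
| "ed (x # xs) (y # ys) =
     min (min (ed xs ys + (if x = y then 0 else 1)) (ed xs (y # ys) + 1)) (ed (x # xs) ys + 1)"

definition substr :: "'a list \<Rightarrow> nat \<Rightarrow> nat \<Rightarrow> 'a list" where
  "substr T i len = take len (drop i T)"

definition is_attractor :: "'a list \<Rightarrow> nat set \<Rightarrow> bool" where
  "is_attractor T \<Gamma> \<longleftrightarrow> \<Gamma> \<subseteq> {..<length T} \<and>
     (\<forall>i j. i \<le> j \<and> j < length T \<longrightarrow>
        (\<exists>i' j'. j' < length T \<and> i' \<le> j' \<and> j' - i' = j - i \<and>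
           substr T i' (j' - i' + 1) = substr T i (j - i + 1) \<and>
           (\<exists>p\<in>\<Gamma>. i' \<le> p \<and> p \<le> j')))"

definition gamma :: "'a list \<Rightarrow> nat" where
  "gamma T = (LEAST k. \<exists>\<Gamma>. is_attractor T \<Gamma> \<and> card \<Gamma> = k)"

definition Substr :: "'a list \<Rightarrow> nat \<Rightarrow> nat" where
  "Substr T k = card {substr T i k | i. i + k \<le> length T}"

definition delta :: "'a list \<Rightarrow> real" where
  "delta T = (if T = [] then 0
              else Max ((\<lambda>k. real (Substr T k) / real k) ` {1..length T}))"

end

theory Submission
  imports Defs
begin

lemma ed_0: "ed xs ys = 0 \<Longrightarrow> xs = ys"
  by (induction xs ys rule: ed.induct) (auto split: if_splits)

lemma ed_le1: "ed xs ys \<le> 1 \<Longrightarrow> \<exists>u v x y. xs = u @ x @ v \<and> ys = u @ y @ v \<and> length x \<le> 1 \<and> length y \<le> 1"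
proof (induction xs ys rule: ed.induct)
  case (1 ys)
  have "length ys \<le> 1" using "1" by simp
  then show ?case by (intro exI[of _ "[]"] exI[of _ ys]) simp
next
  case (2 x xs)
  have "length (x # xs) \<le> 1" using "2" by simp
  then show ?case by (intro exI[of _ "[]"] exI[of _ "x # xs"]) simp
next
  case (3 x xs y ys)
  define A where "A = ed xs ys + (if x = y then 0 else 1)"
  define B where "B = ed xs (y # ys) + 1"
  define C where "C = ed (x # xs) ys + 1"
  have "min (min A B) C \<le> 1" using "3.prems" unfolding A_def B_def C_def by (simp only: ed.simps(3))
  then have "A \<le> 1 \<or> B \<le> 1 \<or> C \<le> 1" by (simp only: min_le_iff_disj disj_assoc)
  then consider "A \<le> 1" | "ed xs (y # ys) = 0" | "ed (x # xs) ys = 0"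
    unfolding B_def C_def by linarith
  then show ?case
  proof cases
    case 1
    show ?thesis
    proof (cases "x = y")
      case True
      with 1 have "ed xs ys \<le> 1" unfolding A_def by simp
      then have "\<exists>u v x y. xs = u @ x @ v \<and> ys = u @ y @ v \<and> length x \<le> 1 \<and> length y \<le> 1"
        by (rule "3.IH"(1))
      then obtain u v a b where uv: "xs = u @ a @ v" "ys = u @ b @ v" "length a \<le> 1" "length b \<le> 1"
        by blast
      show ?thesis using uv True by (intro exI[of _ "x # u"] exI[of _ v] exI[of _ a] exI[of _ b]) simp
    next
      case False
      with 1 have "ed xs ys = 0" unfolding A_def by simp
      then have "xs = ys" by (rule ed_0)
      then show ?thesis by (intro exI[of _ "[]"] exI[of _ xs] exI[of _ "[x]"] exI[of _ "[y]"]) simp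
    qed
  next
    case 2
    then have "xs = y#ys" by (rule ed_0)
    then show ?thesis by (intro exI[of _ "[]"] exI[of _ xs] exI[of _ "[x]"] exI[of _ "[]"]) simp
  next
    case 3
    then have "x#xs = ys" by (rule ed_0)
    then show ?thesis by (intro exI[of _ "[]"] exI[of _ "x # xs"] exI[of _ "[]"] exI[of _ "[y]"]) simp
  qed
qed

lemma substr_shift: "substr T a M = substr T b M \<Longrightarrow> d + l \<le> M \<Longrightarrow> substr T (a+d) l = substr T (b+d) l"
proof -
  assume h: "substr T a M = substr T b M" "d + l \<le> M"
  have eq: "substr T (c+d) l = take l (drop d (substr T c M))" for c
  proof -
    have "take l (drop d (substr T c M)) = take l (take (M - d) (drop d (drop c T)))"
      unfolding substr_def by (simp only: drop_take)
    also have "\<dots> = take l (drop d (drop c T))" using h(2) by (simp add: min_def)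
    also have "\<dots> = substr T (c+d) l" unfolding substr_def by (simp add: add.commute)
    finally show ?thesis by simp
  qed
  show ?thesis using h(1) eq[of a] eq[of b] by simp
qed

lemma length_substr: "length (substr T i m) = min m (length T - i)"
  by (simp add: substr_def)


definition fresh :: "'a list \<Rightarrow> nat \<Rightarrow> nat set" where
  "fresh T k = {i. i < length T \<and> (\<forall>i'<i. substr T i' (4*k) \<noteq> substr T i (4*k))}"

definition Qset :: "'a list \<Rightarrow> nat \<Rightarrow> nat set" where
  "Qset T k = {p. k dvd p \<and> k \<le> p \<and> {p-k..p} \<subseteq> fresh T k}"

definition Gk :: "'a list \<Rightarrow> nat \<Rightarrow> nat set" where
  "Gk T k = {q. q < length T \<and> k dvd q \<and> (q < 4*k \<or> (\<exists>p\<in>Qset T k. p \<le> q \<and> q < p + 4*k))}"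

definition Gall :: "'a list \<Rightarrow> nat set" where
  "Gall T = (\<Union>e\<in>{e. 2^e \<le> length T}. Gk T (2^e))"

lemma finite_Substr_set: "finite {substr T i k | i. i + k \<le> length T}"
proof -
  have "{substr T i k | i. i + k \<le> length T} \<subseteq> (\<lambda>i. substr T i k) ` {..length T}" by auto
  then show ?thesis using finite_surj by blast
qed

lemma card_fresh: "card (fresh T k) \<le> Substr T (4*k) + 4*k"
proof -
  let ?n = "length T"
  have inj: "inj_on (\<lambda>i. substr T i (4*k)) (fresh T k)"
  proof (rule inj_onI)
    fix i j assume ij: "i \<in> fresh T k" "j \<in> fresh T k" "substr T i (4*k) = substr T j (4*k)"
    show "i = j"
    proof (rule ccontr)
      assume "i \<noteq> j"
      then consider "i < j" | "j < i" by linarith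
      then show False
      proof cases
        case 1 then show False using ij(2,3) unfolding fresh_def by auto
      next
        case 2 then show False using ij(1,3) unfolding fresh_def by auto
      qed
    qed
  qed
  have sub: "(\<lambda>i. substr T i (4*k)) ` fresh T k \<subseteq>
      {substr T i (4*k) | i. i + 4*k \<le> ?n} \<union> (\<lambda>i. substr T i (4*k)) ` {?n - 4*k..<?n}"
  proof
    fix w assume "w \<in> (\<lambda>i. substr T i (4*k)) ` fresh T k"
    then obtain i where i: "i < ?n" "w = substr T i (4*k)" unfolding fresh_def by auto
    show "w \<in> {substr T i (4*k) | i. i + 4*k \<le> ?n} \<union> (\<lambda>i. substr T i (4*k)) ` {?n - 4*k..<?n}"
    proof (cases "i + 4*k \<le> ?n")
      case True then show ?thesis using i by auto
    next
      case False then have "i \<in> {?n - 4*k..<?n}" using i by auto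
      then show ?thesis using i by auto
    qed
  qed
  have "card (fresh T k) = card ((\<lambda>i. substr T i (4*k)) ` fresh T k)"
    using inj by (simp add: card_image)
  also have "\<dots> \<le> card ({substr T i (4*k) | i. i + 4*k \<le> ?n} \<union> (\<lambda>i. substr T i (4*k)) ` {?n - 4*k..<?n})"
    by (rule card_mono[OF _ sub]) (simp add: finite_Substr_set)
  also have "\<dots> \<le> card {substr T i (4*k) | i. i + 4*k \<le> ?n} + card ((\<lambda>i. substr T i (4*k)) ` {?n - 4*k..<?n})"
    by (rule card_Un_le)
  also have "card ((\<lambda>i. substr T i (4*k)) ` {?n - 4*k..<?n}) \<le> 4*k"
    by (rule order.trans[OF card_image_le]) auto
  finally show ?thesis unfolding Substr_def by simp
qed

lemma finite_fresh: "finite (fresh T k)"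
  unfolding fresh_def by auto

lemma Qset_sub: "Qset T k \<subseteq> fresh T k"
  unfolding Qset_def by auto

lemma card_Qset: assumes "k \<ge> 1" shows "card (Qset T k) * k \<le> card (fresh T k)"
proof -
  have fin: "finite (Qset T k)" using Qset_sub finite_fresh finite_subset by blast
  have inj: "inj_on (\<lambda>(p,j). p - j) (Qset T k \<times> {..<k})"
  proof -
    have key: "p = p' \<and> j = j'" if a: "p \<in> Qset T k" "j \<in> {..<k}" "p' \<in> Qset T k" "j' \<in> {..<k}" "p - j = p' - j'" for p j p' j'
    proof -
    have "k dvd p" "k dvd p'" "k \<le> p" "k \<le> p'" using a unfolding Qset_def by auto
    then have hh: "k \<le> p" "k \<le> p'" by auto
    from \<open>k dvd p\<close> obtain a where a1: "p = k*a" by (rule dvdE)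
    from \<open>k dvd p'\<close> obtain b where b1: "p' = k*b" by (rule dvdE)
    note ab = a1 b1 hh
    have "a = b"
    proof (rule ccontr)
      assume "a \<noteq> b"
      then consider "a < b" | "b < a" by linarith
      then show False
      proof cases
        case 1
        then have "a + 1 \<le> b" by simp
        then have "k*(a + 1) \<le> k*b" by (rule mult_le_mono2)
        then have "k*a + k \<le> k*b" by (simp add: algebra_simps)
        then show False using a ab by auto
      next
        case 2
        then have "b + 1 \<le> a" by simp
        then have "k*(b + 1) \<le> k*a" by (rule mult_le_mono2)
        then have "k*b + k \<le> k*a" by (simp add: algebra_simps)
        then show False using a ab by auto
      qed
    qed
    then have "p = p'" using ab by simp
    moreover have "j < p" "j' < p'" using a(2,4) hh by auto
    ultimately show "p = p' \<and> j = j'" using a(5) by auto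
    qed
    show ?thesis unfolding inj_on_def using key by auto
  qed
  have sub: "(\<lambda>(p,j). p - j) ` (Qset T k \<times> {..<k}) \<subseteq> fresh T k"
  proof (rule subsetI)
    fix x assume "x \<in> (\<lambda>(p,j). p - j) ` (Qset T k \<times> {..<k})"
    then obtain p j where "x = p - j" "p \<in> Qset T k" "j < k" by auto
    then show "x \<in> fresh T k" unfolding Qset_def by auto
  qed
  have "card (Qset T k) * k = card (Qset T k \<times> {..<k})" by (simp add: card_cartesian_product)
  also have "\<dots> = card ((\<lambda>(p,j). p - j) ` (Qset T k \<times> {..<k}))" using inj by (simp add: card_image)
  also have "\<dots> \<le> card (fresh T k)" by (rule card_mono[OF finite_fresh sub])
  finally show ?thesis .
qed

lemma card_Gk: assumes "k \<ge> 1" shows "card (Gk T k) \<le> 4 * (card (Qset T k) + 1)"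
proof -
  have fin: "finite (Qset T k)" using Qset_sub finite_fresh finite_subset by blast
  have sub: "Gk T k \<subseteq> (\<lambda>(p,j). p + j*k) ` (insert 0 (Qset T k) \<times> {..<4})"
  proof
    fix q assume q: "q \<in> Gk T k"
    then have "k dvd q" unfolding Gk_def by auto
    then obtain c where c: "q = k*c" by (rule dvdE)
    from q consider "q < 4*k" | p where "p \<in> Qset T k" "p \<le> q" "q < p + 4*k" unfolding Gk_def by auto
    then show "q \<in> (\<lambda>(p,j). p + j*k) ` (insert 0 (Qset T k) \<times> {..<4})"
    proof cases
      case 1
      then have "k*c < k*4" using c by (simp add: mult.commute)
      then have "c < 4" using assms by simp
      then show ?thesis using c by (auto intro!: image_eqI[where x="(0,c)"])
    next
      case 2
      then have "k dvd p" unfolding Qset_def by auto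
      then obtain a where a: "p = k*a" by (rule dvdE)
      have "k*a \<le> k*c" using 2 a c by simp
      then have "a \<le> c" using assms by simp
      have "k*c < k*(a+4)" using 2 a c by (simp add: algebra_simps)
      then have "c < a + 4" using assms by simp
      then have "q = p + (c - a)*k" "c - a < 4" using a c \<open>a \<le> c\<close> by (auto simp: algebra_simps diff_mult_distrib)
      then show ?thesis using 2 by (auto intro!: image_eqI[where x="(p,c-a)"])
    qed
  qed
  have "card (Gk T k) \<le> card ((\<lambda>(p,j). p + j*k) ` (insert 0 (Qset T k) \<times> {..<4}))"
    by (rule card_mono[OF _ sub]) (simp add: fin)
  also have "\<dots> \<le> card (insert 0 (Qset T k) \<times> {..<(4::nat)})" by (rule card_image_le) (simp add: fin)
  also have "\<dots> \<le> (card (Qset T k) + 1) * 4"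
  proof -
    have "card (insert 0 (Qset T k)) \<le> card (Qset T k) + 1" by (simp add: card_insert_if fin)
    then show ?thesis by (simp add: card_cartesian_product)
  qed
  finally show ?thesis by simp
qed

lemma div_facts: "(k::nat) \<ge> 1 \<Longrightarrow> m div k * k \<le> m \<and> m < m div k * k + k"
proof -
  assume k: "k \<ge> 1"
  have "m div k * k + m mod k = m" by (rule div_mult_mod_eq)
  moreover have "m mod k < k" using k by simp
  ultimately show ?thesis by linarith
qed

lemma Gk_cover:
  assumes k: "k \<ge> 1" and l: "k \<le> l" "l < 2*k" and il: "i + l \<le> length T"
  shows "\<exists>s. substr T s l = substr T i l \<and> s + l \<le> length T \<and> (\<exists>q\<in>Gk T k. s \<le> q \<and> q < s + l)"
proof -
  let ?n = "length T"
  define s0 where "s0 = (LEAST s. substr T s l = substr T i l)"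
  have P0: "substr T s0 l = substr T i l" unfolding s0_def by (rule LeastI[of _ i]) simp
  have "length (substr T s0 l) = l" using P0 il by (simp add: length_substr)
  then have s0n: "s0 + l \<le> ?n" using k l by (simp add: length_substr min_def split: if_splits)
  have minimal: "\<And>s. s < s0 \<Longrightarrow> substr T s l \<noteq> substr T i l" unfolding s0_def by (rule not_less_Least)
  define q where "q = (s0 + k - 1) div k * k"
  have qf: "q \<le> s0 + k - 1" "s0 + k - 1 < q + k" using div_facts[OF k, of "s0+k-1"] unfolding q_def by auto
  have qs: "s0 \<le> q" "q < s0 + l" using qf k l by auto
  have qdvd: "k dvd q" unfolding q_def by simp
  have qn: "q < ?n" using qs s0n by auto
  show ?thesis
  proof (cases "s0 + l < 4*k")
    case True
    then have "q \<in> Gk T k" using qs qdvd qn unfolding Gk_def by auto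
    then show ?thesis using P0 s0n qs by blast
  next
    case False
    define x0 where "x0 = s0 + l - 4*k"
    have x0s: "x0 + 2*k < s0" using False l unfolding x0_def by auto
    have fr: "x \<in> fresh T k" if "x0 \<le> x" "x \<le> s0" for x
    proof -
      have "x < ?n" using that s0n l k by auto
      moreover have "substr T i' (4*k) \<noteq> substr T x (4*k)" if "i' < x" for i'
      proof
        assume eq: "substr T i' (4*k) = substr T x (4*k)"
        have "(s0 - x) + l \<le> 4*k" using \<open>x0 \<le> x\<close> \<open>x \<le> s0\<close> False unfolding x0_def by auto
        from substr_shift[OF eq this] have "substr T (i' + (s0 - x)) l = substr T (x + (s0 - x)) l" .
        then have "substr T (i' + (s0 - x)) l = substr T i l" using P0 \<open>x \<le> s0\<close> by simp
        moreover have "i' + (s0 - x) < s0" using \<open>i' < x\<close> \<open>x \<le> s0\<close> by auto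
        ultimately show False using minimal by blast
      qed
      ultimately show ?thesis unfolding fresh_def by auto
    qed
    define p where "p = (x0 + 2*k) div k * k"
    have pf: "p \<le> x0 + 2*k" "x0 + 2*k < p + k" using div_facts[OF k, of "x0+2*k"] unfolding p_def by auto
    have pQ: "p \<in> Qset T k"
    proof -
      have "k dvd p" unfolding p_def by simp
      moreover have "k \<le> p" using pf by auto
      moreover have "{p-k..p} \<subseteq> fresh T k"
      proof
        fix x assume "x \<in> {p-k..p}"
        then have "x0 \<le> x" "x \<le> s0" using pf x0s by auto
        then show "x \<in> fresh T k" by (rule fr)
      qed
      ultimately show ?thesis unfolding Qset_def by auto
    qed
    have "p \<le> q" "q < p + 4*k" using pf qf x0s qs False l unfolding x0_def by auto
    then have "q \<in> Gk T k" using qs qdvd qn pQ unfolding Gk_def by auto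
    then show ?thesis using P0 s0n qs by blast
  qed
qed

lemma Gall_attractor: "is_attractor T (Gall T)"
  unfolding is_attractor_def
proof (intro conjI allI impI)
  show "Gall T \<subseteq> {..<length T}" unfolding Gall_def Gk_def by auto
next
  fix i j assume ij: "i \<le> j \<and> j < length T"
  define l where "l = j - i + 1"
  obtain e where e: "2^e \<le> l" "l < 2^(e+1)" using ex_power_ivl1[of 2 l] l_def by auto
  have en: "2^e \<le> length T" using e ij l_def by auto
  obtain s q where sq: "substr T s l = substr T i l" "s + l \<le> length T" "q \<in> Gk T (2^e)" "s \<le> q" "q < s + l"
    using Gk_cover[of "2^e" l i T] e ij l_def by auto
  have qG: "q \<in> Gall T" using sq(3) en unfolding Gall_def by auto
  show "\<exists>i' j'. j' < length T \<and> i' \<le> j' \<and> j' - i' = j - i \<and>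
           substr T i' (j' - i' + 1) = substr T i (j - i + 1) \<and> (\<exists>p\<in>Gall T. i' \<le> p \<and> p \<le> j')"
    apply (rule exI[of _ s], rule exI[of _ "s + l - 1"])
    using sq qG l_def by auto
qed

lemma attractor_finite: "is_attractor T G \<Longrightarrow> finite G"
  unfolding is_attractor_def using finite_subset by blast

lemma gamma_le_card: "is_attractor T G \<Longrightarrow> gamma T \<le> card G"
  unfolding gamma_def by (rule Least_le) blast

lemma gamma_attained: "\<exists>G. is_attractor T G \<and> card G = gamma T"
  unfolding gamma_def by (rule LeastI_ex) (use Gall_attractor in blast)

lemma gamma_bound:
  assumes D: "D \<ge> 1" and S: "\<And>m. m \<ge> 1 \<Longrightarrow> real (Substr T m) \<le> real m * D"
  shows "real (gamma T) \<le> 36 * D * real (card {e. 2^e \<le> length T})"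
proof -
  let ?E = "{e::nat. 2^e \<le> length T}"
  have finE: "finite ?E"
  proof (rule finite_subset)
    show "?E \<subseteq> {..length T}"
    proof
      fix e assume "e \<in> ?E"
      then have "2^e \<le> length T" by simp
      moreover have "e < 2^e" by (rule less_exp)
      ultimately have "e \<le> length T" by linarith
      then show "e \<in> {..length T}" by simp
    qed
  qed auto
  have lev: "real (card (Gk T k)) \<le> 36 * D" if k: "k \<ge> 1" for k
  proof -
    have "card (Qset T k) * k \<le> Substr T (4*k) + 4*k"
      using card_Qset[OF k, of T] card_fresh[of T k] by linarith
    then have "real (card (Qset T k) * k) \<le> real (Substr T (4*k) + 4*k)"
      by (simp only: of_nat_le_iff)
    then have "real (card (Qset T k)) * real k \<le> real (Substr T (4*k)) + 4 * real k"
      by simp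
    also have "\<dots> \<le> real (4*k) * D + 4 * real k" using S[of "4*k"] k by simp
    finally have "real (card (Qset T k)) * real k \<le> (4 * D + 4) * real k" by (simp add: algebra_simps)
    then have Q: "real (card (Qset T k)) \<le> 4 * D + 4" using k by simp
    have "real (card (Gk T k)) \<le> real (4 * (card (Qset T k) + 1))"
      using card_Gk[OF k, of T] by (simp only: of_nat_le_iff)
    then have "real (card (Gk T k)) \<le> 4 * (real (card (Qset T k)) + 1)" by simp
    also have "\<dots> = 4 * real (card (Qset T k)) + 4" by (simp add: algebra_simps)
    finally show ?thesis using Q D by linarith
  qed
  have "gamma T \<le> card (Gall T)" by (rule gamma_le_card[OF Gall_attractor])
  also have "card (Gall T) \<le> (\<Sum>e\<in>?E. card (Gk T (2^e)))" unfolding Gall_def by (rule card_UN_le[OF finE])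
  finally have "real (gamma T) \<le> real (\<Sum>e\<in>?E. card (Gk T (2^e)))" by (simp only: of_nat_le_iff)
  also have "\<dots> = (\<Sum>e\<in>?E. real (card (Gk T (2^e))))" by (rule of_nat_sum)
  also have "\<dots> \<le> (\<Sum>e\<in>?E. 36 * D)" by (rule sum_mono) (rule lev, simp)
  finally show ?thesis by (simp add: mult.commute)
qed

lemma Substr_zero: "length T < m \<Longrightarrow> Substr T m = 0"
  unfolding Substr_def by simp

lemma Substr1: "T \<noteq> [] \<Longrightarrow> Substr T 1 \<ge> 1"
proof -
  assume "T \<noteq> []"
  then have "substr T 0 1 \<in> {substr T i 1 | i. i + 1 \<le> length T}" by (auto simp: Suc_le_eq)
  then have "{substr T i 1 | i. i + 1 \<le> length T} \<noteq> {}" by blast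
  moreover have "finite {substr T i 1 | i. i + 1 \<le> length T}" by (rule finite_Substr_set)
  ultimately have "card {substr T i 1 | i. i + 1 \<le> length T} > 0"
    by (simp only: card_gt_0_iff) blast
  then show ?thesis unfolding Substr_def by simp
qed

lemma delta_props:
  assumes "T \<noteq> []"
  shows "delta T \<ge> 1" and "\<And>m. m \<ge> 1 \<Longrightarrow> m \<le> length T \<Longrightarrow> real (Substr T m) / real m \<le> delta T"
proof -
  have fin: "finite ((\<lambda>k. real (Substr T k) / real k) ` {1..length T})" by simp
  show h: "\<And>m. m \<ge> 1 \<Longrightarrow> m \<le> length T \<Longrightarrow> real (Substr T m) / real m \<le> delta T"
    unfolding delta_def using assms fin by (auto intro!: Max_ge)
  have "real (Substr T 1) / real 1 \<le> delta T" by (rule h) (use assms in \<open>auto simp: Suc_le_eq\<close>)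
  then show "delta T \<ge> 1" using Substr1[OF assms] by simp
qed

lemma Substr_le_delta:
  assumes "T \<noteq> []" "m \<ge> 1" shows "real (Substr T m) \<le> real m * delta T"
proof (cases "m \<le> length T")
  case True
  then have "real (Substr T m) / real m \<le> delta T" using delta_props(2)[OF assms(1)] assms by auto
  then show ?thesis using assms by (simp add: field_simps)
next
  case False
  then show ?thesis using Substr_zero[of T m] delta_props(1)[OF assms(1)] by simp
qed

lemma Substr_attractor: assumes G: "is_attractor T G" and m: "m \<ge> 1"
  shows "Substr T m \<le> m * card G"
proof -
  have fin: "finite G" by (rule attractor_finite[OF G])
  have sub: "{substr T i m | i. i + m \<le> length T} \<subseteq> (\<lambda>(p,r). substr T (p - r) m) ` (G \<times> {..<m})"
  proof
    fix w assume "w \<in> {substr T i m | i. i + m \<le> length T}"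
    then obtain i where i: "w = substr T i m" "i + m \<le> length T" by auto
    have "i \<le> i + m - 1 \<and> i + m - 1 < length T" using i m by auto
    then obtain i' j' where ij: "j' < length T" "i' \<le> j'" "j' - i' = (i + m - 1) - i"
        "substr T i' (j' - i' + 1) = substr T i ((i + m - 1) - i + 1)" "\<exists>p\<in>G. i' \<le> p \<and> p \<le> j'"
      using G unfolding is_attractor_def by blast
    obtain p where p: "p \<in> G" "i' \<le> p" "p \<le> j'" using ij by blast
    have "w = substr T i' m" using ij i m by simp
    moreover have "i' = p - (p - i')" "p - i' < m" using p ij m by auto
    ultimately show "w \<in> (\<lambda>(p,r). substr T (p - r) m) ` (G \<times> {..<m})"
      using p by (auto intro!: image_eqI[where x="(p, p - i')"])
  qed
  have "Substr T m \<le> card ((\<lambda>(p,r). substr T (p - r) m) ` (G \<times> {..<m}))"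
    unfolding Substr_def by (rule card_mono[OF _ sub]) (simp add: fin)
  also have "\<dots> \<le> card (G \<times> {..<m})" by (rule card_image_le) (simp add: fin)
  finally show ?thesis by (simp add: card_cartesian_product mult.commute)
qed

lemma delta_le_gamma: "delta T \<le> real (gamma T)"
proof -
  obtain G where G: "is_attractor T G" "card G = gamma T" using gamma_attained by blast
  show ?thesis
  proof (cases "T = []")
    case True then show ?thesis by (simp add: delta_def)
  next
    case False
    have "real (Substr T k) / real k \<le> real (card G)" if "k \<in> {1..length T}" for k
    proof -
      have "real (Substr T k) \<le> real k * real (card G)" using Substr_attractor[OF G(1), of k] that
        by (simp only: of_nat_le_iff of_nat_mult[symmetric] atLeastAtMost_iff)
      then show ?thesis using that by (simp add: field_simps)
    qed
    then show ?thesis unfolding delta_def using False G(2) by (auto intro!: Max.boundedI simp: Suc_le_eq)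
  qed
qed

lemma Substr_edit:
  assumes T: "T = u @ x @ v" and T': "T' = u @ y @ v" and x: "length x \<le> 1" and y: "length y \<le> 1"
  shows "Substr T' m \<le> Substr T m + m"
proof -
  let ?a = "length u + length y"
  have sub: "{substr T' i m | i. i + m \<le> length T'} \<subseteq>
     {substr T i m | i. i + m \<le> length T} \<union> (\<lambda>i. substr T' i m) ` {?a - m..<?a}"
  proof
    fix w assume "w \<in> {substr T' i m | i. i + m \<le> length T'}"
    then obtain i where i: "w = substr T' i m" "i + m \<le> length T'" by auto
    consider "i + m \<le> length u" | "?a \<le> i" | "i \<in> {?a - m..<?a}"
    proof -
      have "i + m \<le> length u \<or> ?a \<le> i \<or> (?a - m \<le> i \<and> i < ?a)" using y by linarith
      then show ?thesis using that by auto
    qed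
    then show "w \<in> {substr T i m | i. i + m \<le> length T} \<union> (\<lambda>i. substr T' i m) ` {?a - m..<?a}"
    proof cases
      case 1
      have "substr T' i m = substr T i m" using 1 unfolding T T' substr_def by simp
      moreover have "i + m \<le> length T" using 1 T by simp
      ultimately show ?thesis using i by blast
    next
      case 2
      have "substr T' i m = substr T (i - length y + length x) m" using 2 unfolding T T' substr_def
        by (simp add: drop_append) (simp add: add.commute)
      moreover have "i - length y + length x + m \<le> length T" using 2 i T T' by simp
      ultimately show ?thesis using i by blast
    next
      case 3
      then show ?thesis using i by blast
    qed
  qed
  have "Substr T' m \<le> card ({substr T i m | i. i + m \<le> length T} \<union> (\<lambda>i. substr T' i m) ` {?a - m..<?a})"
    unfolding Substr_def by (rule card_mono[OF _ sub]) (simp add: finite_Substr_set)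
  also have "\<dots> \<le> Substr T m + card ((\<lambda>i. substr T' i m) ` {?a - m..<?a})"
    unfolding Substr_def by (rule card_Un_le)
  also have "card ((\<lambda>i. substr T' i m) ` {?a - m..<?a}) \<le> m"
    by (rule order.trans[OF card_image_le]) auto
  finally show ?thesis by simp
qed

lemma card_levels:
  assumes "N \<ge> 1"
  shows "real (card {e::nat. 2^e \<le> N}) \<le> log 2 (real N) + 1"
proof -
  let ?L = "log 2 (real N)"
  have L0: "?L \<ge> 0" using assms by simp
  have "{e::nat. 2^e \<le> N} \<subseteq> {..nat \<lfloor>?L\<rfloor>}"
  proof
    fix e assume "e \<in> {e::nat. 2^e \<le> N}"
    then have "real (2^e) \<le> real N" by simp
    then have "(2::real) powr (real e) \<le> real N" by (simp add: powr_realpow)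
    then have "real e \<le> ?L" using assms by (subst le_log_iff) auto
    then have "int e \<le> \<lfloor>?L\<rfloor>" by (simp add: le_floor_iff)
    then show "e \<in> {..nat \<lfloor>?L\<rfloor>}" by simp
  qed
  then have "card {e::nat. 2^e \<le> N} \<le> card {..nat \<lfloor>?L\<rfloor>}" by (rule card_mono[rotated]) simp
  then have "real (card {e::nat. 2^e \<le> N}) \<le> real (nat \<lfloor>?L\<rfloor>) + 1" by simp
  also have "real (nat \<lfloor>?L\<rfloor>) \<le> ?L" using L0 by linarith
  finally show ?thesis by simp
qed

lemma log_bound:
  assumes "n \<ge> (2::nat)"
  shows "log 2 (real n + 1) + 1 \<le> 3 / ln 2 * ln (real n)"
proof -
  have n2: "real n \<ge> 2" using assms by simp
  have "2 * real n \<le> real n * real n" using n2 by (intro mult_right_mono) auto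
  then have "real n + 1 \<le> real n * real n" using n2 by linarith
  then have "ln (real n + 1) \<le> ln (real n * real n)" using n2 by simp
  also have "\<dots> = 2 * ln (real n)" using n2 by (simp add: ln_mult)
  finally have a: "ln (real n + 1) \<le> 2 * ln (real n)" .
  have b: "ln 2 \<le> ln (real n)" using n2 by simp
  have l2: "ln (2::real) > 0" by simp
  have "log 2 (real n + 1) + 1 = (ln (real n + 1) + ln 2) / ln 2" using l2 by (simp add: log_def field_simps)
  also have "\<dots> \<le> (3 * ln (real n)) / ln 2" using a b l2 by (intro divide_right_mono) auto
  finally show ?thesis by simp
qed

lemma finite_levels: "finite {e::nat. 2^e \<le> (N::nat)}"
proof (rule finite_subset)
  show "{e::nat. (2::nat)^e \<le> N} \<subseteq> {..N}"
  proof
    fix e assume "e \<in> {e::nat. (2::nat)^e \<le> N}"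
    then have "(2::nat)^e \<le> N" by simp
    moreover have "e < 2^e" by (rule less_exp)
    ultimately have "e \<le> N" by linarith
    then show "e \<in> {..N}" by simp
  qed
qed auto

theorem mainTheorem4:
  shows "\<exists>c::real. \<exists>n0::nat. \<forall>(T::'a list) (T'::'a list).
     length T \<ge> n0 \<and> ed T T' = 1 \<and>
     (length T' = length T \<or> length T' = length T + 1 \<or> length T' + 1 = length T) \<longrightarrow>
       real (gamma T') \<le> c * real (gamma T) * ln (real (length T)) \<and>
       real (gamma T') - real (gamma T) \<le> c * delta T * ln (real (length T))"
proof (intro exI allI impI)
  fix T T' :: "'a list"
  assume h: "length T \<ge> 2 \<and> ed T T' = 1 \<and>
     (length T' = length T \<or> length T' = length T + 1 \<or> length T' + 1 = length T)"
  let ?n = "length T"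
  let ?c = "216 / ln (2::real)"
  have n2: "?n \<ge> 2" and ed1: "ed T T' = 1" using h by auto
  have Tne: "T \<noteq> []" using n2 by auto
  obtain u v x y where uv: "T = u @ x @ v" "T' = u @ y @ v" "length x \<le> 1" "length y \<le> 1"
    using ed_le1[of T T'] ed1 by auto
  have n': "length T' \<le> ?n + 1" using uv by simp
  define D where "D = delta T + 1"
  have d1: "delta T \<ge> 1" by (rule delta_props(1)[OF Tne])
  have D1: "D \<ge> 1" and D2: "D \<le> 2 * delta T" using d1 unfolding D_def by auto
  have S: "real (Substr T' m) \<le> real m * D" if "m \<ge> 1" for m
  proof -
    have "real (Substr T' m) \<le> real (Substr T m) + real m"
      using Substr_edit[OF uv, of m] by (simp only: of_nat_le_iff of_nat_add[symmetric])
    also have "\<dots> \<le> real m * delta T + real m" using Substr_le_delta[OF Tne that] by simp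
    finally show ?thesis unfolding D_def by (simp add: algebra_simps)
  qed
  have g: "real (gamma T') \<le> 36 * D * real (card {e. 2^e \<le> length T'})"
    by (rule gamma_bound[OF D1 S])
  have "card {e::nat. 2^e \<le> length T'} \<le> card {e::nat. 2^e \<le> ?n + 1}"
    by (rule card_mono[OF finite_levels]) (use n' in auto)
  then have "real (card {e::nat. 2^e \<le> length T'}) \<le> log 2 (real (?n + 1)) + 1"
    using card_levels[of "?n + 1"] by linarith
  also have "\<dots> \<le> 3 / ln 2 * ln (real ?n)" using log_bound[OF n2] by (simp add: add.commute)
  finally have cl: "real (card {e::nat. 2^e \<le> length T'}) \<le> 3 / ln 2 * ln (real ?n)" .
  have lnn: "ln (real ?n) \<ge> 0" using n2 by simp
  have l2: "ln (2::real) > 0" by simp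
  have "real (gamma T') \<le> 36 * D * (3 / ln 2 * ln (real ?n))"
  proof -
    have "36 * D * real (card {e. 2^e \<le> length T'}) \<le> 36 * D * (3 / ln 2 * ln (real ?n))"
      using cl D1 by (intro mult_left_mono) auto
    then show ?thesis using g by linarith
  qed
  also have "\<dots> \<le> 36 * (2 * delta T) * (3 / ln 2 * ln (real ?n))"
    using D2 lnn l2 by (intro mult_right_mono mult_left_mono) auto
  also have "\<dots> = ?c * delta T * ln (real ?n)" by (simp add: field_simps)
  finally have main: "real (gamma T') \<le> ?c * delta T * ln (real ?n)" .
  have cpos: "?c \<ge> 0" using l2 by simp
  have "?c * delta T * ln (real ?n) \<le> ?c * real (gamma T) * ln (real ?n)"
    using delta_le_gamma[of T] cpos lnn by (intro mult_right_mono mult_left_mono) auto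
  then show "real (gamma T') \<le> ?c * real (gamma T) * ln (real ?n) \<and>
       real (gamma T') - real (gamma T) \<le> ?c * delta T * ln (real ?n)"
    using main by simp
qed
end
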